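(* Let $I$ be a compact interval and let $f\colon I\to I$ be continuous. Let $2^f\colon 2^I\to 2^I$ be the induced map $2^f(C)=f(C)$ on the hyperspace $2^I$. Then the set $\mathrm{Per}(2^f)$ of fundamental periods of periodic points of $2^f$ is equal to one of $\{1\}$, $\{1,2\}$, or $\mathbb N$.
   Context: For a compact metric space $X$, $2^X$ denotes the space of nonempty closed subsets of $X$ with the Hausdorff metric, and for continuous $f\colon X\to X$ the induced map $2^f\colon 2^X\to 2^X$ is $2^f(C)=\{f(x):x\in C\}$. For a map $g$, $\mathrm{Per}(g)$ denotes the set of all $k\in\mathbb N$ such that some point has fundamental (least) period $k$ under $g$. *)

theory Defs
  imports "HOL-Analysis.Analysis"
begin

text \<open>The hyperspace 2^X: nonempty closed subsets of X (for compact X, closed in X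
  is the same as closed). The Hausdorff metric is irrelevant for periods.\<close>
definition hyperspace :: "'a::topological_space set \<Rightarrow> 'a set set" where
  "hyperspace X = {C. C \<subseteq> X \<and> C \<noteq> {} \<and> closed C}"

definition induced_map :: "('a \<Rightarrow> 'b) \<Rightarrow> 'a set \<Rightarrow> 'b set" where
  "induced_map f = (\<lambda>C. f ` C)"

definition Per :: "('a \<Rightarrow> 'a) \<Rightarrow> 'a set \<Rightarrow> nat set" where
  "Per g S = {k. k \<ge> 1 \<and> (\<exists>x\<in>S. (g ^^ k) x = x \<and> (\<forall>j. 0 < j \<and> j < k \<longrightarrow> (g ^^ j) x \<noteq> x))}"

end

theory Submission
  imports Defs
begin


lemma iter_props:
  fixes f :: "real \<Rightarrow> real"
  assumes c: "continuous_on {a..b} f" and m: "f ` {a..b} \<subseteq> {a..b}"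
  shows "continuous_on {a..b} (f^^n) \<and> (f^^n) ` {a..b} \<subseteq> {a..b}"
proof (induction n)
  case 0 then show ?case by (simp add: continuous_on_id)
next
  case (Suc n)
  then have "continuous_on {a..b} (f \<circ> (f^^n))"
    by (intro continuous_on_compose) (auto intro: continuous_on_subset[OF c])
  with Suc m show ?case by (auto simp: image_subset_iff)
qed

lemma seq_far:
  fixes t :: "nat \<Rightarrow> real"
  assumes "t \<longlonglongrightarrow> L" "L \<noteq> c" "\<And>n. t n \<noteq> c"
  shows "\<exists>e>0. \<forall>n. e \<le> \<bar>t n - c\<bar>"
proof -
  define d where "d = \<bar>L - c\<bar> / 2"
  have d: "d > 0" using assms(2) by (simp add: d_def)
  from assms(1) d obtain N where N: "\<And>n. n \<ge> N \<Longrightarrow> \<bar>t n - L\<bar> < d"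
    unfolding LIMSEQ_def dist_real_def by blast
  define e where "e = Min (insert d ((\<lambda>n. \<bar>t n - c\<bar>) ` {..<N}))"
  have "e > 0" unfolding e_def using d assms(3) by (subst Min_gr_iff) auto
  moreover have "e \<le> \<bar>t n - c\<bar>" for n
  proof (cases "n < N")
    case True then show ?thesis unfolding e_def by (intro Min_le) auto
  next
    case False
    then have "\<bar>t n - L\<bar> < d" using N by auto
    then have "d \<le> \<bar>t n - c\<bar>" unfolding d_def
      using abs_triangle_ineq[of "L - t n" "t n - c"] by (simp add: abs_minus_commute)
    moreover have "e \<le> d" unfolding e_def by (intro Min_le) auto
    ultimately show ?thesis by linarith
  qed
  ultimately show ?thesis by blast
qed

lemma far_mod:
  fixes s :: "nat \<Rightarrow> real"
  assumes m: "m > 0" and h: "\<And>j. j < m \<Longrightarrow> \<exists>e>0. \<forall>n. e \<le> \<bar>s (m*n+j) - c\<bar>"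
  shows "\<exists>e>0. \<forall>n. e \<le> \<bar>s n - c\<bar>"
proof -
  from h obtain E where E: "\<And>j. j < m \<Longrightarrow> E j > 0 \<and> (\<forall>n. E j \<le> \<bar>s (m*n+j) - c\<bar>)"
    by metis
  define e where "e = Min (E ` {..<m})"
  have "e > 0" unfolding e_def using E m by (subst Min_gr_iff) auto
  moreover have "e \<le> \<bar>s n - c\<bar>" for n
  proof -
    have "n = m * (n div m) + n mod m" by simp
    then have "E (n mod m) \<le> \<bar>s n - c\<bar>" using E[of "n mod m"] m
      by (metis mod_less_divisor)
    moreover have "e \<le> E (n mod m)" unfolding e_def using m by (intro Min_le) auto
    ultimately show ?thesis by linarith
  qed
  ultimately show ?thesis by blast
qed




lemma core:
  fixes f :: "real \<Rightarrow> real"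
  assumes ab: "a \<le> b" and c: "continuous_on {a..b} f" and m: "f ` {a..b} \<subseteq> {a..b}"
  defines "K \<equiv> \<Inter>(range (\<lambda>n. (f^^n) ` {a..b}))"
  shows "\<exists>u v. K = {u..v} \<and> a \<le> u \<and> u \<le> v \<and> v \<le> b \<and> f ` K = K"
proof -
  define S where "S n = (f^^n) ` {a..b}" for n
  have K: "K = \<Inter>(range S)" unfolding K_def S_def by simp
  have it: "continuous_on {a..b} (f^^n) \<and> (f^^n) ` {a..b} \<subseteq> {a..b}" for n
    using iter_props[OF c m] by blast
  have Ssub: "S n \<subseteq> {a..b}" for n using it unfolding S_def by blast
  have Scomp: "compact (S n)" for n unfolding S_def
    using it by (intro compact_continuous_image) auto
  have Sconn: "connected (S n)" for n unfolding S_def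
    using it by (intro connected_continuous_image) auto
  have Sne: "S n \<noteq> {}" for n unfolding S_def using ab by auto
  have SSuc: "S (Suc n) = f ` S n" for n unfolding S_def by (simp add: image_comp)
  have SSuc2: "S (Suc n) \<subseteq> S n" for n
  proof -
    have "S (Suc n) = (f^^n) ` (f ` {a..b})" unfolding S_def
      by (simp add: funpow_Suc_right image_comp del: funpow.simps)
    then show ?thesis using m unfolding S_def by auto
  qed
  have nest: "m \<le> n \<Longrightarrow> S n \<subseteq> S m" for m n
    by (rule lift_Suc_antimono_le[of S]) (use SSuc2 in auto)
  have Kne: "K \<noteq> {}" unfolding K by (rule compact_nest) (use Scomp Sne nest in auto)
  have Kconn: "connected K" unfolding K by (rule connected_nest) (use Scomp Sconn nest in auto)
  have Kcomp: "compact K" unfolding K by (rule compact_Inter) (use Scomp in auto)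
  have "\<exists>u v. K = {u..v}" using connected_compact_interval_1[of K] Kconn Kcomp by simp
  then obtain u v where uv: "K = {u..v}" by blast
  have "u \<le> v" using Kne uv by auto
  have Kab: "K \<subseteq> {a..b}" using Ssub unfolding K by blast
  then have "a \<le> u" "v \<le> b" using uv \<open>u \<le> v\<close> by auto
  have fK1: "f ` K \<subseteq> K"
  proof
    fix y assume "y \<in> f ` K"
    then obtain x where x: "x \<in> K" "y = f x" by auto
    have "y \<in> S n" for n
    proof -
      have "x \<in> S n" using x unfolding K by auto
      then have "y \<in> S (Suc n)" using SSuc x by auto
      then show ?thesis using SSuc2 by auto
    qed
    then show "y \<in> K" unfolding K by auto
  qed
  have fK2: "K \<subseteq> f ` K"
  proof
    fix y assume y: "y \<in> K"
    define T where "T n = {x \<in> S n. f x = y}" for n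
    have "compact (T n)" for n
    proof -
      have cl: "closed (T n)" unfolding T_def
      proof (rule continuous_closed_preimage_constant)
        show "continuous_on (S n) f" using continuous_on_subset[OF c Ssub] .
        show "closed (S n)" using Scomp[of n] by (rule compact_imp_closed)
      qed
      have eq: "S n \<inter> T n = T n" unfolding T_def by auto
      have "compact (S n \<inter> T n)" using compact_Int_closed[OF Scomp[of n] cl] .
      then show ?thesis by (simp only: eq)
    qed
    moreover have "T n \<noteq> {}" for n
    proof -
      have "y \<in> S (Suc n)" using y unfolding K by auto
      then show ?thesis unfolding T_def SSuc by auto
    qed
    moreover have "m \<le> n \<Longrightarrow> T n \<subseteq> T m" for m n unfolding T_def using nest by auto
    ultimately have "\<Inter>(range T) \<noteq> {}" by (intro compact_nest) auto
    then obtain x where "\<forall>n. x \<in> T n" by auto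
    then have "x \<in> K" "f x = y" unfolding K T_def by auto
    then show "y \<in> f ` K" by auto
  qed
  have "f ` K = K" using fK1 fK2 by (rule subset_antisym)
  then show ?thesis using uv \<open>a \<le> u\<close> \<open>u \<le> v\<close> \<open>v \<le> b\<close>
    by (intro exI[of _ u] exI[of _ v]) simp
qed

lemma periodic_in_core:
  fixes f :: "real \<Rightarrow> real"
  assumes m: "f ` {a..b} \<subseteq> {a..b}" and C: "C \<subseteq> {a..b}" and k: "k > 0" and P: "(f^^k) ` C = C"
  shows "C \<subseteq> \<Inter>(range (\<lambda>n. (f^^n) ` {a..b}))"
proof -
  have SSuc2: "(f^^Suc n) ` {a..b} \<subseteq> (f^^n) ` {a..b}" for n
  proof -
    have "(f^^Suc n) ` {a..b} = (f^^n) ` (f ` {a..b})"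
      by (simp add: funpow_Suc_right image_comp del: funpow.simps)
    then show ?thesis using m by auto
  qed
  have nest: "p \<le> n \<Longrightarrow> (f^^n) ` {a..b} \<subseteq> (f^^p) ` {a..b}" for p n
    by (rule lift_Suc_antimono_le[of "\<lambda>n. (f^^n) ` {a..b}"]) (use SSuc2 in auto)
  have Pm: "(f^^(k*q)) ` C = C" for q
  proof (induction q)
    case 0 then show ?case by simp
  next
    case (Suc q)
    have "(f^^(k*Suc q)) ` C = (f^^k) ` ((f^^(k*q)) ` C)"
      by (simp only: mult_Suc_right funpow_add image_comp)
    then show ?case using Suc P by simp
  qed
  have "C \<subseteq> (f^^n) ` {a..b}" for n
  proof -
    have "C = (f^^(k*n)) ` C" using Pm by simp
    also have "\<dots> \<subseteq> (f^^(k*n)) ` {a..b}" using C by auto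
    also have "\<dots> \<subseteq> (f^^n) ` {a..b}" using k by (intro nest) simp
    finally show ?thesis .
  qed
  then show ?thesis by auto
qed




lemma inv4:
  fixes f :: "real \<Rightarrow> real"
  assumes pq: "p \<le> q" and c: "continuous_on {p..q} f" and m: "f ` {p..q} \<subseteq> {p..q}"
    and id4: "\<And>t. t \<in> {p..q} \<Longrightarrow> f (f (f (f t))) = t"
  shows "\<And>t. t \<in> {p..q} \<Longrightarrow> f (f t) = t"
proof -
  have inj: "inj_on f {p..q}"
  proof (rule inj_onI)
    fix x y assume xy: "x \<in> {p..q}" "y \<in> {p..q}" "f x = f y"
    then show "x = y" using id4[of x] id4[of y] by metis
  qed
  have "strict_mono_on {p..q} f \<or> strict_antimono_on {p..q} f"
    using injective_eq_monotone_map[of "{p..q}" f] inj c is_interval_cc by blast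
  then have incr: "\<And>x y. x \<in> {p..q} \<Longrightarrow> y \<in> {p..q} \<Longrightarrow> x < y \<Longrightarrow> f (f x) < f (f y)"
  proof
    assume sm: "strict_mono_on {p..q} f"
    fix x y assume "x \<in> {p..q}" "y \<in> {p..q}" "x < y"
    then show "f (f x) < f (f y)" using sm m unfolding monotone_on_def by (metis image_subset_iff)
  next
    assume sm: "strict_antimono_on {p..q} f"
    fix x y assume "x \<in> {p..q}" "y \<in> {p..q}" "x < y"
    then show "f (f x) < f (f y)" using sm m unfolding monotone_on_def by (metis image_subset_iff)
  qed
  fix t assume t: "t \<in> {p..q}"
  have ht: "f (f t) \<in> {p..q}" using m t by (meson image_subset_iff)
  show "f (f t) = t"
  proof (rule ccontr)
    assume ne: "f (f t) \<noteq> t"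
    show False
    proof (cases "t < f (f t)")
      case True
      then have "f (f t) < f (f (f (f t)))" using incr[OF t ht] by simp
      then show False using True id4[OF t] by simp
    next
      case False
      then have "f (f t) < t" using ne by simp
      then have "f (f (f (f t))) < f (f t)" using incr[OF ht t] by simp
      then show False using \<open>f (f t) < t\<close> id4[OF t] by simp
    qed
  qed
qed

lemma lim_fixed:
  fixes \<phi> :: "real \<Rightarrow> real"
  assumes c: "continuous_on {\<alpha>..\<beta>} \<phi>" and s: "\<And>n. s n \<in> {\<alpha>..\<beta>}" and L: "s \<longlonglongrightarrow> L"
    and Lin: "L \<in> {\<alpha>..\<beta>}" and L2: "(\<lambda>n. \<phi> (s n)) \<longlonglongrightarrow> L"
  shows "\<phi> L = L"
proof -
  have "(\<lambda>n. \<phi> (s n)) \<longlonglongrightarrow> \<phi> L"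
    by (rule continuous_on_tendsto_compose[OF c L Lin]) (use s in auto)
  then show ?thesis using L2 LIMSEQ_unique by blast
qed

lemma orbit_plus:
  fixes \<phi> :: "real \<Rightarrow> real"
  assumes ab: "\<alpha> < \<beta>" and c: "continuous_on {\<alpha>..\<beta>} \<phi>" and fa: "\<phi> \<alpha> = \<alpha>" and fb: "\<phi> \<beta> = \<beta>"
    and pos: "\<And>t. \<alpha> < t \<Longrightarrow> t < \<beta> \<Longrightarrow> t < \<phi> t"
  shows "\<exists>fw bw. fw 0 = bw 0 \<and> \<alpha> < fw 0 \<and> fw 0 < \<beta> \<and> (\<forall>n. fw n \<in> {\<alpha>..\<beta>} \<and> bw n \<in> {\<alpha>..\<beta>})
     \<and> (\<forall>n. \<phi> (fw n) = fw (Suc n)) \<and> (\<forall>n. \<phi> (bw (Suc n)) = bw n) \<and> (\<forall>n>0. fw n \<noteq> fw 0)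
     \<and> fw \<longlonglongrightarrow> \<beta> \<and> bw \<longlonglongrightarrow> \<alpha>"
proof -
  have pre: "\<exists>s. \<alpha> < s \<and> s < t \<and> \<phi> s = t" if t: "\<alpha> < t" "t < \<beta>" for t
  proof -
    have "continuous_on {\<alpha>..t} \<phi>" using c t by (auto intro: continuous_on_subset)
    moreover have "\<phi> \<alpha> \<le> t" "t \<le> \<phi> t" using fa t pos[OF t] by auto
    ultimately obtain s where s: "\<alpha> \<le> s" "s \<le> t" "\<phi> s = t" using IVT'[of \<phi> \<alpha> t t] t by auto
    have "s \<noteq> \<alpha>" using s fa t by auto
    moreover have "s \<noteq> t" using s pos[OF t] by auto
    ultimately have "\<alpha> < s" "s < t" using s by auto
    then show ?thesis using s by blast
  qed
  then obtain P where P: "\<And>t. \<alpha> < t \<Longrightarrow> t < \<beta> \<Longrightarrow> \<alpha> < P t \<and> P t < t \<and> \<phi> (P t) = t"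
    by metis
  have bck: "\<exists>bw. bw 0 = z0 \<and> (\<forall>n. bw n \<in> {\<alpha>..\<beta>}) \<and> (\<forall>n. \<phi> (bw (Suc n)) = bw n) \<and> bw \<longlonglongrightarrow> \<alpha>"
    if z0: "\<alpha> < z0" "z0 < \<beta>" for z0
  proof -
    define bw where "bw n = (P^^n) z0" for n
    have I: "\<alpha> < bw n \<and> bw n < \<beta>" for n
    proof (induction n)
      case 0 then show ?case using z0 by (simp add: bw_def)
    next
      case (Suc n)
      then show ?case using P[of "bw n"] by (simp add: bw_def)
    qed
    have S: "bw (Suc n) = P (bw n)" for n by (simp add: bw_def)
    have dec: "bw (Suc n) < bw n" for n using S P I by auto
    have ph: "\<phi> (bw (Suc n)) = bw n" for n using S P I by auto
    have ds: "decseq bw" using dec by (intro decseq_SucI) (auto intro: less_imp_le)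
    have bb: "bdd_below (range bw)" using I by (intro bdd_belowI[of _ \<alpha>]) (auto intro: less_imp_le)
    define L where "L = (INF i. bw i)"
    have lim: "bw \<longlonglongrightarrow> L" unfolding L_def by (rule LIMSEQ_decseq_INF[OF bb ds])
    have L1: "\<alpha> \<le> L" unfolding L_def using I by (intro cINF_greatest) (auto intro: less_imp_le)
    have L2: "L \<le> bw 1" unfolding L_def using bb by (intro cINF_lower) auto
    have L3: "L < z0" using L2 dec[of 0] by (simp add: bw_def)
    have "\<phi> L = L"
    proof (rule lim_fixed[OF c _ LIMSEQ_Suc[OF lim]])
      show "\<And>n. bw (Suc n) \<in> {\<alpha>..\<beta>}" using I by (auto intro: less_imp_le)
      show "L \<in> {\<alpha>..\<beta>}" using L1 L3 z0 by auto
      show "(\<lambda>n. \<phi> (bw (Suc n))) \<longlonglongrightarrow> L" using ph lim by simp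
    qed
    then have "L = \<alpha>" using pos[of L] L1 L3 z0 by force
    then show ?thesis using lim I ph by (intro exI[of _ bw]) (auto simp: bw_def intro: less_imp_le)
  qed
  show ?thesis
  proof (cases "\<exists>y. \<alpha> < y \<and> y < \<beta> \<and> \<beta> \<le> \<phi> y")
    case True
    then obtain y where y: "\<alpha> < y" "y < \<beta>" "\<beta> \<le> \<phi> y" by auto
    have "continuous_on {\<alpha>..y} \<phi>" using c y by (auto intro: continuous_on_subset)
    then obtain cc where cc: "\<alpha> \<le> cc" "cc \<le> y" "\<phi> cc = \<beta>" using IVT'[of \<phi> \<alpha> \<beta> y] y fa ab by auto
    have "cc \<noteq> \<alpha>" using cc fa ab by auto
    then have cc2: "\<alpha> < cc" "cc < \<beta>" using cc y by auto
    obtain bw where bw: "bw 0 = cc" "\<forall>n. bw n \<in> {\<alpha>..\<beta>}" "\<forall>n. \<phi> (bw (Suc n)) = bw n" "bw \<longlonglongrightarrow> \<alpha>"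
      using bck[OF cc2] by blast
    define fw where "fw n = (if n = 0 then cc else \<beta>)" for n :: nat
    have "(\<lambda>n. fw (Suc n)) \<longlonglongrightarrow> \<beta>" by (simp add: fw_def)
    then have "fw \<longlonglongrightarrow> \<beta>" by (rule LIMSEQ_imp_Suc)
    moreover have "\<forall>n. \<phi> (fw n) = fw (Suc n)" using cc fb by (simp add: fw_def)
    moreover have "\<forall>n. fw n \<in> {\<alpha>..\<beta>}" using cc2 ab by (simp add: fw_def)
    moreover have "\<forall>n>0. fw n \<noteq> fw 0" using cc2 by (simp add: fw_def)
    ultimately show ?thesis using bw cc2 by (intro exI[of _ fw] exI[of _ bw]) (simp add: fw_def)
  next
    case False
    then have inside: "\<And>y. \<alpha> < y \<Longrightarrow> y < \<beta> \<Longrightarrow> \<phi> y < \<beta>" by force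
    define z0 where "z0 = (\<alpha> + \<beta>) / 2"
    have z0: "\<alpha> < z0" "z0 < \<beta>" using ab by (auto simp: z0_def)
    obtain bw where bw: "bw 0 = z0" "\<forall>n. bw n \<in> {\<alpha>..\<beta>}" "\<forall>n. \<phi> (bw (Suc n)) = bw n" "bw \<longlonglongrightarrow> \<alpha>"
      using bck[OF z0] by blast
    define fw where "fw n = (\<phi>^^n) z0" for n
    have I: "\<alpha> < fw n \<and> fw n < \<beta>" for n
    proof (induction n)
      case 0 then show ?case using z0 by (simp add: fw_def)
    next
      case (Suc n)
      then show ?case using pos[of "fw n"] inside[of "fw n"] by (simp add: fw_def)
    qed
    have S: "fw (Suc n) = \<phi> (fw n)" for n by (simp add: fw_def)
    have inc: "fw n < fw (Suc n)" for n using S pos I by auto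
    have isq: "incseq fw" using inc by (intro incseq_SucI) (auto intro: less_imp_le)
    have bb: "bdd_above (range fw)" using I by (intro bdd_aboveI[of _ \<beta>]) (auto intro: less_imp_le)
    define L where "L = (SUP i. fw i)"
    have lim: "fw \<longlonglongrightarrow> L" unfolding L_def by (rule LIMSEQ_incseq_SUP[OF bb isq])
    have L1: "L \<le> \<beta>" unfolding L_def using I by (intro cSUP_least) (auto intro: less_imp_le)
    have L2: "fw 0 \<le> L" unfolding L_def using bb by (intro cSUP_upper) auto
    have "\<phi> L = L"
    proof (rule lim_fixed[OF c _ lim])
      show "\<And>n. fw n \<in> {\<alpha>..\<beta>}" using I by (auto intro: less_imp_le)
      show "L \<in> {\<alpha>..\<beta>}" using L1 L2 I[of 0] by auto
      show "(\<lambda>n. \<phi> (fw n)) \<longlonglongrightarrow> L" using S LIMSEQ_Suc[OF lim] by simp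
    qed
    then have "L = \<beta>" using pos[of L] L1 L2 I[of 0] by force
    moreover have "\<forall>n>0. fw n \<noteq> fw 0"
    proof (intro allI impI)
      fix n :: nat assume "n > 0"
      have "fw 0 < fw n" using \<open>n > 0\<close>
      proof (induction n)
        case 0 then show ?case by simp
      next
        case (Suc n) then show ?case using inc[of n] inc[of 0] by (cases "n = 0") auto
      qed
      then show "fw n \<noteq> fw 0" by simp
    qed
    ultimately show ?thesis using bw lim I S z0
      by (intro exI[of _ fw] exI[of _ bw]) (auto simp: fw_def intro: less_imp_le)
  qed
qed




lemma orbit_any:
  fixes \<phi> :: "real \<Rightarrow> real"
  assumes ab: "\<alpha> < \<beta>" and c: "continuous_on {\<alpha>..\<beta>} \<phi>" and fa: "\<phi> \<alpha> = \<alpha>" and fb: "\<phi> \<beta> = \<beta>"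
    and nf: "\<And>t. \<alpha> < t \<Longrightarrow> t < \<beta> \<Longrightarrow> \<phi> t \<noteq> t"
  shows "\<exists>fw bw L1 L2. fw 0 = bw 0 \<and> \<phi> (fw 0) \<noteq> fw 0 \<and> (\<forall>n. fw n \<in> {\<alpha>..\<beta>} \<and> bw n \<in> {\<alpha>..\<beta>})
     \<and> (\<forall>n. \<phi> (fw n) = fw (Suc n)) \<and> (\<forall>n. \<phi> (bw (Suc n)) = bw n) \<and> (\<forall>n>0. fw n \<noteq> fw 0)
     \<and> fw \<longlonglongrightarrow> L1 \<and> bw \<longlonglongrightarrow> L2 \<and> L1 \<in> {\<alpha>..\<beta>} \<and> L2 \<in> {\<alpha>..\<beta>} \<and> \<phi> L1 = L1 \<and> \<phi> L2 = L2"
proof -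
  have sign: "(\<forall>t. \<alpha> < t \<and> t < \<beta> \<longrightarrow> t < \<phi> t) \<or> (\<forall>t. \<alpha> < t \<and> t < \<beta> \<longrightarrow> \<phi> t < t)"
  proof (rule ccontr)
    assume "\<not> ?thesis"
    then obtain t1 t2 where t: "\<alpha> < t1" "t1 < \<beta>" "\<phi> t1 \<le> t1" "\<alpha> < t2" "t2 < \<beta>" "t2 \<le> \<phi> t2"
      by (auto simp: not_less)
    have "\<phi> t1 < t1" "t2 < \<phi> t2" using nf t by force+
    have g: "continuous_on {min t1 t2..max t1 t2} (\<lambda>t. \<phi> t - t)"
      proof -
      have "{min t1 t2..max t1 t2} \<subseteq> {\<alpha>..\<beta>}" using t by auto
      then have "continuous_on {min t1 t2..max t1 t2} \<phi>" using c continuous_on_subset by blast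
      then show ?thesis by (intro continuous_intros)
    qed
    have "\<exists>s. min t1 t2 \<le> s \<and> s \<le> max t1 t2 \<and> \<phi> s - s = 0"
    proof (cases "t1 \<le> t2")
      case True
      then show ?thesis using IVT'[of "\<lambda>t. \<phi> t - t" t1 0 t2] g t \<open>\<phi> t1 < t1\<close> \<open>t2 < \<phi> t2\<close> by auto
    next
      case False
      then show ?thesis using IVT2'[of "\<lambda>t. \<phi> t - t" t1 0 t2] g t \<open>\<phi> t1 < t1\<close> \<open>t2 < \<phi> t2\<close> by auto
    qed
    then obtain s where "min t1 t2 \<le> s" "s \<le> max t1 t2" "\<phi> s = s" by auto
    then show False using nf[of s] t by auto
  qed
  then show ?thesis
  proof
    assume p: "\<forall>t. \<alpha> < t \<and> t < \<beta> \<longrightarrow> t < \<phi> t"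
    obtain fw bw where *: "fw 0 = bw 0 \<and> \<alpha> < fw 0 \<and> fw 0 < \<beta> \<and> (\<forall>n. fw n \<in> {\<alpha>..\<beta>} \<and> bw n \<in> {\<alpha>..\<beta>})
     \<and> (\<forall>n. \<phi> (fw n) = fw (Suc n)) \<and> (\<forall>n. \<phi> (bw (Suc n)) = bw n) \<and> (\<forall>n>0. fw n \<noteq> fw 0)
     \<and> fw \<longlonglongrightarrow> \<beta> \<and> bw \<longlonglongrightarrow> \<alpha>"
      using orbit_plus[OF ab c fa fb] p by blast
    then have "\<phi> (fw 0) \<noteq> fw 0" using nf by blast
    then show ?thesis using * fa fb ab
      by (intro exI[of _ fw] exI[of _ bw] exI[of _ \<beta>] exI[of _ \<alpha>]) auto
  next
    assume p: "\<forall>t. \<alpha> < t \<and> t < \<beta> \<longrightarrow> \<phi> t < t"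
    define \<psi> where "\<psi> t = - \<phi> (- t)" for t
    have ab': "-\<beta> < -\<alpha>" using ab by simp
    have c': "continuous_on {-\<beta>..-\<alpha>} \<psi>"
    proof -
      have "continuous_on {-\<beta>..-\<alpha>} (\<lambda>t::real. -t)" by (intro continuous_intros)
      moreover have "(\<lambda>t::real. -t) ` {-\<beta>..-\<alpha>} \<subseteq> {\<alpha>..\<beta>}" by auto
      ultimately have "continuous_on {-\<beta>..-\<alpha>} (\<phi> \<circ> (\<lambda>t. -t))"
        using continuous_on_compose continuous_on_subset c by blast
      then have "continuous_on {-\<beta>..-\<alpha>} (\<lambda>t. - (\<phi> \<circ> (\<lambda>t. -t)) t)"
        by (intro continuous_on_minus)
      then show ?thesis by (simp add: \<psi>_def o_def)
    qed
    have fa': "\<psi> (-\<beta>) = -\<beta>" "\<psi> (-\<alpha>) = -\<alpha>" using fa fb by (auto simp: \<psi>_def)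
    have p': "t < \<psi> t" if "-\<beta> < t" "t < -\<alpha>" for t
    proof -
      have "\<phi> (-t) < -t" using p that by auto
      then show ?thesis by (simp add: \<psi>_def)
    qed
    obtain fw bw where *: "fw 0 = bw 0 \<and> -\<beta> < fw 0 \<and> fw 0 < -\<alpha> \<and> (\<forall>n. fw n \<in> {-\<beta>..-\<alpha>} \<and> bw n \<in> {-\<beta>..-\<alpha>})
     \<and> (\<forall>n. \<psi> (fw n) = fw (Suc n)) \<and> (\<forall>n. \<psi> (bw (Suc n)) = bw n) \<and> (\<forall>n>0. fw n \<noteq> fw 0)
     \<and> fw \<longlonglongrightarrow> -\<alpha> \<and> bw \<longlonglongrightarrow> -\<beta>"
      using orbit_plus[OF ab' c' fa' p'] by blast
    define fw' where "fw' n = - fw n" for n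
    define bw' where "bw' n = - bw n" for n
    have e1: "\<phi> (fw' n) = fw' (Suc n)" for n
      using * unfolding fw'_def \<psi>_def by (metis minus_minus)
    have e2: "\<phi> (bw' (Suc n)) = bw' n" for n
      using * unfolding bw'_def \<psi>_def by (metis minus_minus)
    have l1: "fw' \<longlonglongrightarrow> \<alpha>" unfolding fw'_def using tendsto_minus[of fw "-\<alpha>"] * by simp
    have l2: "bw' \<longlonglongrightarrow> \<beta>" unfolding bw'_def using tendsto_minus[of bw "-\<beta>"] * by simp
    have r: "\<forall>n. fw' n \<in> {\<alpha>..\<beta>} \<and> bw' n \<in> {\<alpha>..\<beta>}"
    proof
      fix n
      have "fw n \<in> {-\<beta>..-\<alpha>}" "bw n \<in> {-\<beta>..-\<alpha>}" using * by blast+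
      then show "fw' n \<in> {\<alpha>..\<beta>} \<and> bw' n \<in> {\<alpha>..\<beta>}" by (auto simp: fw'_def bw'_def)
    qed
    have "\<phi> (fw' 0) \<noteq> fw' 0" using nf[of "fw' 0"] * by (auto simp: fw'_def)
    then show ?thesis using * e1 e2 l1 l2 r fa fb ab
      by (intro exI[of _ fw'] exI[of _ bw'] exI[of _ \<alpha>] exI[of _ \<beta>]) (auto simp: fw'_def bw'_def)
  qed
qed




lemma fixpt:
  fixes g :: "real \<Rightarrow> real"
  assumes "p \<le> q" "continuous_on {p..q} g" "p \<le> g p" "g q \<le> q"
  shows "\<exists>s. p \<le> s \<and> s \<le> q \<and> g s = s"
proof -
  have "continuous_on {p..q} (\<lambda>t. g t - t)" using assms(2) by (intro continuous_intros)
  then obtain s where "p \<le> s" "s \<le> q" "g s - s = 0"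
    using IVT2'[of "\<lambda>t. g t - t" q 0 p] assms by auto
  then show ?thesis by auto
qed

lemma find_good:
  fixes f :: "real \<Rightarrow> real"
  assumes uv: "u \<le> v" and c: "continuous_on {u..v} f" and sur: "f ` {u..v} = {u..v}"
    and y: "y \<in> {u..v}" and hy: "f (f y) \<noteq> y"
  shows "\<exists>\<alpha> \<beta>. u \<le> \<alpha> \<and> \<alpha> < \<beta> \<and> \<beta> \<le> v \<and> f (f (f (f \<alpha>))) = \<alpha> \<and> f (f (f (f \<beta>))) = \<beta>
     \<and> (\<forall>t. \<alpha> < t \<and> t < \<beta> \<longrightarrow> f (f (f (f t))) \<noteq> t)"
proof (rule ccontr)
  assume NG0: "\<not> ?thesis"
  define K where "K = {u..v}"
  define h where "h t = f (f t)" for t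
  define \<phi> where "\<phi> t = h (h t)" for t
  have NG: "\<exists>t. \<alpha> < t \<and> t < \<beta> \<and> \<phi> t = t" if "u \<le> \<alpha>" "\<alpha> < \<beta>" "\<beta> \<le> v" "\<phi> \<alpha> = \<alpha>" "\<phi> \<beta> = \<beta>" for \<alpha> \<beta>
    using NG0 that unfolding \<phi>_def h_def by blast
  have mK: "f t \<in> K" if "t \<in> K" for t using sur that unfolding K_def by blast
  have hK: "h t \<in> K" if "t \<in> K" for t using mK that unfolding h_def by blast
  have pK: "\<phi> t \<in> K" if "t \<in> K" for t using hK that unfolding \<phi>_def by blast
  have cK: "continuous_on K f" using c unfolding K_def .
  have ch: "continuous_on K h" unfolding h_def
    by (rule continuous_on_compose2[OF cK cK]) (use mK in auto)
  have cp: "continuous_on K \<phi>" unfolding \<phi>_def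
    by (rule continuous_on_compose2[OF ch ch]) (use hK in auto)
  have hsur: "h ` K = K" using sur unfolding h_def K_def by (simp add: image_image[symmetric])
  have sub: "continuous_on {p..q} g" if "continuous_on K g" "u \<le> p" "q \<le> v" for p q g
    using that continuous_on_subset unfolding K_def by (metis atLeastatMost_subset_iff order_refl)
  have fp: "\<phi> (f t) = f (\<phi> t)" for t by (simp add: \<phi>_def h_def)
  define F where "F = {t \<in> K. \<phi> t = t}"
  have Fcl: "closed F"
  proof -
    have "closed {t \<in> K. \<phi> t - t = 0}"
      by (rule continuous_closed_preimage_constant) (use cp in \<open>auto intro!: continuous_intros simp: K_def\<close>)
    then show ?thesis unfolding F_def by simp
  qed
  have Fc: "compact F" using Fcl unfolding F_def K_def
    by (metis (no_types, lifting) F_def bounded_closed_interval bounded_subset compact_eq_bounded_closed mem_Collect_eq subsetI)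
  obtain s0 where "u \<le> s0" "s0 \<le> v" "\<phi> s0 = s0"
    using fixpt[OF uv sub[OF cp order_refl order_refl]] pK[of u] pK[of v] uv unfolding K_def by auto
  then have Fne: "F \<noteq> {}" unfolding F_def K_def by auto
  obtain lo where lo: "lo \<in> F" "\<And>t. t \<in> F \<Longrightarrow> lo \<le> t" using compact_attains_inf[OF Fc Fne] by blast
  obtain hi where hi: "hi \<in> F" "\<And>t. t \<in> F \<Longrightarrow> t \<le> hi" using compact_attains_sup[OF Fc Fne] by blast
  have loK: "u \<le> lo" "lo \<le> hi" "hi \<le> v" using lo hi unfolding F_def K_def by auto
  have mid: "\<phi> t = t" if t: "lo \<le> t" "t \<le> hi" for t
  proof (rule ccontr)
    assume nt: "\<phi> t \<noteq> t"
    have A: "compact (F \<inter> {u..t})" using Fc by (intro compact_Int_closed) auto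
    have Ane: "F \<inter> {u..t} \<noteq> {}" using lo t loK by auto
    obtain a' where a': "a' \<in> F \<inter> {u..t}" "\<And>s. s \<in> F \<inter> {u..t} \<Longrightarrow> s \<le> a'"
      using compact_attains_sup[OF A Ane] by blast
    have B: "compact (F \<inter> {t..v})" using Fc by (intro compact_Int_closed) auto
    have Bne: "F \<inter> {t..v} \<noteq> {}" using hi t loK by auto
    obtain b' where b': "b' \<in> F \<inter> {t..v}" "\<And>s. s \<in> F \<inter> {t..v} \<Longrightarrow> b' \<le> s"
      using compact_attains_inf[OF B Bne] by blast
    have "a' \<noteq> t" "b' \<noteq> t" using a' b' nt unfolding F_def by auto
    then have ab: "a' < t" "t < b'" using a' b' by auto
    obtain s where s: "a' < s" "s < b'" "\<phi> s = s"
      using NG[of a' b'] a' b' ab unfolding F_def K_def by auto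
    have "s \<in> F" using s a' b' unfolding F_def K_def by auto
    show False
    proof (cases "s \<le> t")
      case True
      then have "s \<le> a'" using a'(2)[of s] \<open>s \<in> F\<close> s a' by auto
      then show False using s by auto
    next
      case False
      then have "b' \<le> s" using b'(2)[of s] \<open>s \<in> F\<close> s b' by auto
      then show False using s by auto
    qed
  qed
  have left: "t < \<phi> t" if tt: "t \<in> K" "t < lo" for t
  proof (rule ccontr)
    assume "\<not> t < \<phi> t"
    then obtain s where s: "u \<le> s" "s \<le> t" "\<phi> s = s"
      using fixpt[of u t \<phi>] sub[OF cp] pK[of u] tt uv unfolding K_def by auto
    then have "s \<in> F" using tt unfolding F_def K_def by auto
    then show False using lo(2)[of s] s tt by auto
  qed
  have fmid: "f ` {lo..hi} \<subseteq> {lo..hi}"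
  proof
    fix x assume "x \<in> f ` {lo..hi}"
    then obtain t where t: "t \<in> {lo..hi}" "x = f t" by auto
    then have "t \<in> K" using loK unfolding K_def by auto
    then have "f t \<in> F" using fp[of t] mid[of t] t mK unfolding F_def by auto
    then show "x \<in> {lo..hi}" using lo hi t by auto
  qed
  have hmid: "h t = t" if "t \<in> {lo..hi}" for t
    unfolding h_def
  proof (rule inv4[OF loK(2) sub[OF cK loK(1) loK(3)] fmid _ that])
    fix s assume "s \<in> {lo..hi}"
    then show "f (f (f (f s))) = s" using mid by (simp add: \<phi>_def h_def)
  qed
  have hleft: "t < h t" if tt: "t \<in> K" "t < lo" for t
  proof (rule ccontr)
    assume "\<not> t < h t"
    then obtain s where s: "u \<le> s" "s \<le> t" "h s = s"
      using fixpt[of u t h] sub[OF ch] hK[of u] tt uv unfolding K_def by auto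
    then have "s \<in> F" using tt unfolding F_def K_def \<phi>_def by auto
    then show False using lo(2)[of s] s tt by auto
  qed
  have hright: "h t < t" if tt: "t \<in> K" "hi < t" for t
  proof (rule ccontr)
    assume "\<not> h t < t"
    then obtain s where s: "t \<le> s" "s \<le> v" "h s = s"
      using fixpt[of t v h] sub[OF ch] hK[of v] tt uv unfolding K_def by auto
    then have "s \<in> F" using tt unfolding F_def K_def \<phi>_def by auto
    then show False using hi(2)[of s] s tt by auto
  qed
  obtain w where w: "w \<in> K" "h w = v" using hsur uv unfolding K_def by (metis atLeastAtMost_iff imageE order_refl)
  obtain z where z: "z \<in> K" "h z = u" using hsur uv unfolding K_def by (metis atLeastAtMost_iff imageE order_refl)
  have ysplit: "y < lo \<or> hi < y"
  proof (rule ccontr)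
    assume "\<not> ?thesis"
    then have "h y = y" using hmid by auto
    then show False using hy unfolding h_def by simp
  qed
  have c1: "z > hi" if "u < lo"
  proof -
    have "\<not> z < lo" using hleft[OF z(1)] z unfolding K_def by auto
    moreover have "\<not> (lo \<le> z \<and> z \<le> hi)" using hmid[of z] z that by auto
    ultimately show ?thesis by auto
  qed
  have c2: "w < lo" if "hi < v"
  proof -
    have "\<not> hi < w" using hright[OF w(1)] w unfolding K_def by auto
    moreover have "\<not> (lo \<le> w \<and> w \<le> hi)" using hmid[of w] w that by auto
    ultimately show ?thesis by auto
  qed
  have ulo: "u < lo"
    using ysplit y c2 w(1) unfolding K_def by (metis atLeastAtMost_iff le_less_trans less_le_trans)
  have zhi: "hi < z" using c1[OF ulo] .
  have "hi < v" using zhi z(1) unfolding K_def by auto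
  then have wlo: "w < lo" using c2 by blast
  have hlo: "h lo = lo" using hmid loK by auto
  have "continuous_on {w..lo} h" using sub[OF ch] w(1) loK unfolding K_def by auto
  then obtain r where r: "w \<le> r" "r \<le> lo" "h r = z"
    using IVT2'[of h lo z w] hlo w zhi loK z(1) wlo unfolding K_def by auto
  have "r \<noteq> lo" using r hlo zhi loK by auto
  then have rlo: "r < lo" using r by auto
  have pr: "\<phi> r = u" using r z unfolding \<phi>_def by simp
  have "u \<le> r" using w(1) r unfolding K_def by auto
  then obtain s where s: "u \<le> s" "s \<le> r" "\<phi> s = s"
    using fixpt[of u r \<phi>] sub[OF cp] pK[of u] pr rlo loK unfolding K_def by auto
  then have "s \<in> K" using rlo loK unfolding K_def by auto
  then show False using left[of s] s rlo by auto
qed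




lemma pow4: "(f^^4) t = f (f (f (f t)))"
  by (simp add: numeral_eq_Suc)

lemma pow3: "(f^^3) t = f (f (f t))"
  by (simp add: numeral_eq_Suc)

lemma induced_pow:
  fixes f :: "'a \<Rightarrow> 'a"
  shows "(induced_map f ^^ j) D = (f^^j) ` D"
proof (induction j)
  case 0 then show ?case by simp
next
  case (Suc j)
  have "(induced_map f ^^ Suc j) D = induced_map f ((induced_map f ^^ j) D)" by simp
  also have "\<dots> = f ` ((f^^j) ` D)" using Suc by (simp add: induced_map_def)
  also have "\<dots> = (f^^Suc j) ` D" by (simp add: image_comp)
  finally show ?case .
qed

lemma img_closure:
  fixes F :: "real \<Rightarrow> real"
  assumes c: "continuous_on {a..b} F" and T: "T \<subseteq> {a..b}"
  shows "F ` closure T = closure (F ` T)"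
proof -
  have cT: "closure T \<subseteq> {a..b}" using T by (intro closure_minimal) auto
  have cc: "continuous_on (closure T) F" using c cT by (rule continuous_on_subset)
  have "F ` closure T \<subseteq> closure (F ` T)"
    by (rule image_closure_subset[OF cc closed_closure closure_subset])
  moreover have "closure (F ` T) \<subseteq> F ` closure T"
  proof (rule closure_minimal)
    show "F ` T \<subseteq> F ` closure T" using closure_subset by (rule image_mono)
    have "bounded T" using T bounded_subset bounded_closed_interval by blast
    then have "compact (closure T)" by (rule compact_closure[THEN iffD2])
    then show "closed (F ` closure T)" using cc by (intro compact_imp_closed compact_continuous_image)
  qed
  ultimately show ?thesis by blast
qed

lemma construct:
  fixes f :: "real \<Rightarrow> real" and fw bw :: "nat \<Rightarrow> real"
  assumes c: "continuous_on {a..b} f" and m: "f ` {a..b} \<subseteq> {a..b}"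
    and e0: "fw 0 = bw 0" and nf: "(f^^4) (fw 0) \<noteq> fw 0"
    and rng: "\<forall>n. fw n \<in> {a..b} \<and> bw n \<in> {a..b}"
    and ofw: "\<forall>n. (f^^4) (fw n) = fw (Suc n)" and obw: "\<forall>n. (f^^4) (bw (Suc n)) = bw n"
    and np: "\<forall>n>0. fw n \<noteq> fw 0"
    and l1: "fw \<longlonglongrightarrow> L1" and l2: "bw \<longlonglongrightarrow> L2"
    and L: "L1 \<in> {a..b}" "L2 \<in> {a..b}" "(f^^4) L1 = L1" "(f^^4) L2 = L2"
    and n: "n \<ge> 1"
  shows "n \<in> Per (induced_map f) (hyperspace {a..b})"
proof -
  have it: "continuous_on {a..b} (f^^j) \<and> (f^^j) ` {a..b} \<subseteq> {a..b}" for j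
    using iter_props[OF c m] by blast
  have itm: "(f^^j) t \<in> {a..b}" if "t \<in> {a..b}" for j t using it that by blast
  define z where "z k = (if 0 \<le> k then fw (nat k) else bw (nat (-k)))" for k :: int
  have zr: "z k \<in> {a..b}" for k using rng by (simp add: z_def)
  have zs: "(f^^4) (z k) = z (k+1)" for k
  proof (cases "0 \<le> k")
    case True
    then have "nat (k+1) = Suc (nat k)" by simp
    then show ?thesis using True ofw by (simp add: z_def)
  next
    case False
    show ?thesis
    proof (cases "k = -1")
      case True
      then show ?thesis using obw e0 by (simp add: z_def)
    next
      case False
      then have "nat (-k) = Suc (nat (-(k+1)))" "\<not> 0 \<le> k + 1" using \<open>\<not> 0 \<le> k\<close> by auto
      then show ?thesis using \<open>\<not> 0 \<le> k\<close> obw by (simp add: z_def)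
    qed
  qed
  define x where "x i = (f^^(nat (i mod 4))) (z (i div 4))" for i :: int
  have xr: "x i \<in> {a..b}" for i unfolding x_def using zr itm by blast
  have xs: "f (x i) = x (i+1)" for i
  proof (cases "i mod 4 = 3")
    case True
    then have d: "(i+1) mod 4 = 0" "(i+1) div 4 = i div 4 + 1" by presburger+
    have xi: "x i = (f^^3) (z (i div 4))" using True by (simp add: x_def)
    have xi1: "x (i+1) = z (i div 4 + 1)" using d by (simp add: x_def)
    have "f ((f^^3) (z (i div 4))) = (f^^4) (z (i div 4))" by (simp only: pow3 pow4)
    then show ?thesis using xi xi1 zs[of "i div 4"] by simp
  next
    case False
    then have d: "(i+1) mod 4 = i mod 4 + 1" "(i+1) div 4 = i div 4" by presburger+
    have "nat (i mod 4 + 1) = Suc (nat (i mod 4))" by simp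
    then show ?thesis using d by (simp add: x_def)
  qed
  have xj: "(f^^j) (x i) = x (i + int j)" for j i
  proof (induction j)
    case 0 then show ?case by simp
  next
    case (Suc j)
    then show ?case using xs[of "i + int j"] by (simp add: algebra_simps)
  qed
  have x4: "x (4*k) = z k" for k by (simp add: x_def)
  have x0: "x 0 = fw 0" by (simp add: x_def z_def)
  have comm: "(f^^4) ((f^^j) t) = (f^^j) ((f^^4) t)" for j t
  proof -
    have "(f^^4) ((f^^j) t) = (f^^(4+j)) t" by (simp only: funpow_add comp_apply)
    also have "\<dots> = (f^^(j+4)) t" by (simp only: add.commute)
    also have "\<dots> = (f^^j) ((f^^4) t)" by (simp only: funpow_add comp_apply)
    finally show ?thesis .
  qed
  have noper: False if p: "p > 0" "(f^^p) (x 0) = x 0" for p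
  proof -
    have pq: "(f^^(p*q)) (x 0) = x 0" for q
    proof (induction q)
      case 0 then show ?case by simp
    next
      case (Suc q)
      have "(f^^(p*Suc q)) (x 0) = (f^^p) ((f^^(p*q)) (x 0))"
        by (simp only: mult_Suc_right funpow_add comp_apply)
      then show ?case using Suc p by simp
    qed
    have "(f^^(p*4)) (x 0) = x (4 * int p)" using xj[of "p*4" 0] by (simp add: mult.commute)
    also have "\<dots> = fw p" using x4[of "int p"] by (simp add: z_def)
    finally have "fw p = fw 0" using pq[of 4] x0 by simp
    then show False using np p by auto
  qed
  have X4: "x i \<noteq> x 0" if "i \<noteq> 0" for i
  proof
    assume eq: "x i = x 0"
    show False
    proof (cases "i > 0")
      case True
      have "(f^^(nat i)) (x 0) = x i" using xj[of "nat i" 0] True by simp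
      then show False using noper[of "nat i"] eq True by simp
    next
      case False
      then have "i < 0" using that by simp
      have "(f^^(nat (-i))) (x i) = x 0" using xj[of "nat (-i)" i] \<open>i < 0\<close> by simp
      then show False using noper[of "nat (-i)"] eq \<open>i < 0\<close> by simp
    qed
  qed
  have limf: "(\<lambda>k. (f^^j) (s k)) \<longlonglongrightarrow> (f^^j) LL"
    if "s \<longlonglongrightarrow> LL" "\<forall>k. s k \<in> {a..b}" "LL \<in> {a..b}" for j s LL
    using continuous_on_tendsto_compose[of "{a..b}" "f^^j" s LL sequentially] it that by auto
  have limne: "(f^^j) LL \<noteq> x 0" if "(f^^4) LL = LL" for LL j
  proof
    assume "(f^^j) LL = x 0"
    then have "(f^^4) (x 0) = x 0" using comm[of j LL] that by simp
    then show False using nf x0 by simp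
  qed
  have pos: "\<exists>e>0. \<forall>k. e \<le> \<bar>x (int k + 1) - x 0\<bar>"
  proof (rule far_mod[of 4])
    fix j :: nat assume j: "j < 4"
    have eq: "(\<lambda>k. x (int (4*k+j) + 1)) = (\<lambda>k. (f^^(j+1)) (fw k))"
    proof
      fix k
      have i: "int (4*k+j) + 1 = 4 * int k + int (j+1)" by simp
      have "x (int (4*k+j) + 1) = x (4 * int k + int (j+1))" by (simp only: i)
      also have "\<dots> = (f^^(j+1)) (x (4 * int k))" by (rule xj[symmetric])
      also have "x (4 * int k) = fw k" using x4[of "int k"] by (simp add: z_def)
      finally show "x (int (4*k+j) + 1) = (f^^(j+1)) (fw k)" .
    qed
    have "(\<lambda>k. x (int (4*k+j) + 1)) \<longlonglongrightarrow> (f^^(j+1)) L1"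
      unfolding eq by (rule limf[OF l1]) (use rng L in auto)
    moreover have "(f^^(j+1)) L1 \<noteq> x 0" using limne L by blast
    moreover have "\<And>k. x (int (4*k+j) + 1) \<noteq> x 0" using X4 by simp
    ultimately show "\<exists>e>0. \<forall>k. e \<le> \<bar>x (int (4*k+j) + 1) - x 0\<bar>" by (rule seq_far)
  qed simp
  have neg: "\<exists>e>0. \<forall>k. e \<le> \<bar>x (- int k - 1) - x 0\<bar>"
  proof (rule far_mod[of 4])
    fix j :: nat assume j: "j < 4"
    have eq: "(\<lambda>k. x (- int (4*k+j) - 1)) = (\<lambda>k. (f^^(3-j)) (bw (Suc k)))"
    proof
      fix k
      have i: "- int (4*k+j) - 1 = 4 * (- int k - 1) + int (3-j)" using j by simp
      have "x (- int (4*k+j) - 1) = x (4 * (- int k - 1) + int (3-j))" by (simp only: i)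
      also have "\<dots> = (f^^(3-j)) (x (4 * (- int k - 1)))" by (rule xj[symmetric])
      also have "x (4 * (- int k - 1)) = bw (Suc k)" using x4[of "- int k - 1"]
        by (simp add: z_def nat_add_distrib)
      finally show "x (- int (4*k+j) - 1) = (f^^(3-j)) (bw (Suc k))" .
    qed
    have "(\<lambda>k. x (- int (4*k+j) - 1)) \<longlonglongrightarrow> (f^^(3-j)) L2"
      unfolding eq by (rule limf[OF LIMSEQ_Suc[OF l2]]) (use rng L in auto)
    moreover have "(f^^(3-j)) L2 \<noteq> x 0" using limne L by blast
    moreover have "\<And>k. x (- int (4*k+j) - 1) \<noteq> x 0" using X4 by simp
    ultimately show "\<exists>e>0. \<forall>k. e \<le> \<bar>x (- int (4*k+j) - 1) - x 0\<bar>" by (rule seq_far)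
  qed simp
  obtain e1 where e1: "e1 > 0" "\<forall>k. e1 \<le> \<bar>x (int k + 1) - x 0\<bar>" using pos by blast
  obtain e2 where e2: "e2 > 0" "\<forall>k. e2 \<le> \<bar>x (- int k - 1) - x 0\<bar>" using neg by blast
  define e where "e = min e1 e2"
  have e: "e > 0" using e1 e2 by (simp add: e_def)
  have far: "e \<le> \<bar>x i - x 0\<bar>" if "i \<noteq> 0" for i
  proof (cases "i > 0")
    case True
    have "e1 \<le> \<bar>x (int (nat (i - 1)) + 1) - x 0\<bar>" using e1(2) by blast
    moreover have "int (nat (i - 1)) + 1 = i" using True by simp
    ultimately show ?thesis by (simp add: e_def)
  next
    case False
    have "e2 \<le> \<bar>x (- int (nat (- i - 1)) - 1) - x 0\<bar>" using e2(2) by blast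
    moreover have "- int (nat (- i - 1)) - 1 = i" using False that by simp
    ultimately show ?thesis by (simp add: e_def)
  qed
  define S where "S = range (\<lambda>k::int. x (int n * k))"
  define C where "C = closure S"
  have Sab: "S \<subseteq> {a..b}" using xr by (auto simp: S_def)
  have Cab: "C \<subseteq> {a..b}" unfolding C_def using Sab by (intro closure_minimal) auto
  have "x 0 \<in> S" unfolding S_def by (rule range_eqI[of _ _ 0]) simp
  then have x0C: "x 0 \<in> C" unfolding C_def using closure_subset by blast
  have Chyp: "C \<in> hyperspace {a..b}" unfolding hyperspace_def using Cab x0C by (auto simp: C_def)
  have shift: "(induced_map f ^^ j) C = closure (range (\<lambda>k::int. x (int n * k + int j)))" for j
  proof -
    have "(induced_map f ^^ j) C = (f^^j) ` C" by (rule induced_pow)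
    also have "\<dots> = closure ((f^^j) ` S)" unfolding C_def using it Sab by (intro img_closure) auto
    also have "(f^^j) ` S = range (\<lambda>k::int. x (int n * k + int j))"
      unfolding S_def by (simp add: image_image xj)
    finally show ?thesis .
  qed
  have Pn: "(induced_map f ^^ n) C = C"
  proof -
    have "range (\<lambda>k::int. x (int n * k + int n)) = S"
    proof
      show "range (\<lambda>k::int. x (int n * k + int n)) \<subseteq> S" unfolding S_def
      proof
        fix y assume "y \<in> range (\<lambda>k::int. x (int n * k + int n))"
        then obtain k where "y = x (int n * k + int n)" by auto
        then have "y = x (int n * (k + 1))" by (simp add: algebra_simps)
        then show "y \<in> range (\<lambda>k::int. x (int n * k))" by auto
      qed
      show "S \<subseteq> range (\<lambda>k::int. x (int n * k + int n))" unfolding S_def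
      proof
        fix y assume "y \<in> range (\<lambda>k::int. x (int n * k))"
        then obtain k where "y = x (int n * k)" by auto
        then have "y = x (int n * (k - 1) + int n)" by (simp add: algebra_simps)
        then show "y \<in> range (\<lambda>k::int. x (int n * k + int n))" by auto
      qed
    qed
    then show ?thesis using shift[of n] by (simp add: C_def)
  qed
  have Pj: "(induced_map f ^^ j) C \<noteq> C" if j: "0 < j" "j < n" for j
  proof
    assume eqC: "(induced_map f ^^ j) C = C"
    have nz: "int n * k + int j \<noteq> 0" for k :: int
    proof (cases "0 \<le> k")
      case True
      then have "0 \<le> int n * k" by simp
      then show ?thesis using j by linarith
    next
      case False
      then have "int n * k \<le> int n * (-1)" by (intro mult_left_mono) auto
      then show ?thesis using j by linarith
    qed
    have "range (\<lambda>k::int. x (int n * k + int j)) \<subseteq> - ball (x 0) e"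
    proof
      fix y assume "y \<in> range (\<lambda>k::int. x (int n * k + int j))"
      then obtain k where y: "y = x (int n * k + int j)" by auto
      have "e \<le> \<bar>y - x 0\<bar>" unfolding y by (rule far[OF nz[of k]])
      moreover have "dist (x 0) y = \<bar>y - x 0\<bar>" by (simp add: dist_real_def abs_minus_commute)
      ultimately show "y \<in> - ball (x 0) e" by simp
    qed
    then have "closure (range (\<lambda>k::int. x (int n * k + int j))) \<subseteq> - ball (x 0) e"
      by (intro closure_minimal) auto
    then have "x 0 \<notin> (induced_map f ^^ j) C" using shift[of j] e by auto
    then show False using eqC x0C by simp
  qed
  have "\<exists>C\<in>hyperspace {a..b}. (induced_map f ^^ n) C = C \<and> (\<forall>j. 0 < j \<and> j < n \<longrightarrow> (induced_map f ^^ j) C \<noteq> C)"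
  proof (rule bexI[OF _ Chyp])
    show "(induced_map f ^^ n) C = C \<and> (\<forall>j. 0 < j \<and> j < n \<longrightarrow> (induced_map f ^^ j) C \<noteq> C)"
      using Pn Pj by simp
  qed
  then show ?thesis unfolding Per_def using n by simp
qed


theorem theorem3p2:
  fixes f :: "real \<Rightarrow> real" and a b :: real
  assumes "a < b"
    and "continuous_on {a..b} f"
    and "f ` {a..b} \<subseteq> {a..b}"
  shows "Per (induced_map f) (hyperspace {a..b}) \<in> {{1}, {1, 2}, {k. k \<ge> 1}}"
proof -
  note ab = assms(1) and c = assms(2) and m = assms(3)
  define P where "P = Per (induced_map f) (hyperspace {a..b})"
  obtain u v where K: "\<Inter>(range (\<lambda>n. (f^^n) ` {a..b})) = {u..v}" and uv: "a \<le> u" "u \<le> v" "v \<le> b"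
    and fK: "f ` {u..v} = {u..v}"
    using core[of a b f] ab c m by auto
  have Kin: "{u..v} \<in> hyperspace {a..b}" unfolding hyperspace_def using uv by auto
  have gK: "(induced_map f ^^ 1) {u..v} = {u..v}" using fK by (simp add: induced_map_def)
  have one: "1 \<in> P" unfolding P_def Per_def using Kin gK by auto
  have sub: "P \<subseteq> {k. k \<ge> 1}" unfolding P_def Per_def by auto
  show ?thesis
  proof (cases "\<forall>y\<in>{u..v}. f (f y) = y")
    case True
    have le2: "k \<le> 2" if k: "k \<in> P" for k
    proof (rule ccontr)
      assume "\<not> k \<le> 2"
      from k obtain C where C: "C \<in> hyperspace {a..b}" "(induced_map f ^^ k) C = C"
        "\<forall>j. 0 < j \<and> j < k \<longrightarrow> (induced_map f ^^ j) C \<noteq> C" "k \<ge> 1"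
        unfolding P_def Per_def by auto
      have Cab: "C \<subseteq> {a..b}" using C(1) unfolding hyperspace_def by auto
      have "(f^^k) ` C = C" using C(2) induced_pow[where f=f and j=k and D=C] by simp
      moreover have k0: "0 < k" using C(4) by simp
      ultimately have "C \<subseteq> \<Inter>(range (\<lambda>n. (f^^n) ` {a..b}))" using periodic_in_core[OF m Cab k0] by blast
      then have "C \<subseteq> {u..v}" using K by simp
      then have "\<forall>y\<in>C. f (f y) = y" using True by auto
      then have "(\<lambda>y. f (f y)) ` C = C" by (simp add: image_cong[of C C "\<lambda>y. f (f y)" id])
      moreover have "(induced_map f ^^ 2) C = (\<lambda>y. f (f y)) ` C"
        by (simp add: induced_map_def numeral_eq_Suc image_image)
      ultimately show False using C(3) \<open>\<not> k \<le> 2\<close> by auto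
    qed
    have "P \<subseteq> {1, 2}" using le2 sub by fastforce
    then have "P = {1} \<or> P = {1, 2}" using one by auto
    then show ?thesis unfolding P_def[symmetric] by auto
  next
    case False
    then obtain y where y: "y \<in> {u..v}" "f (f y) \<noteq> y" by auto
    have cuv: "continuous_on {u..v} f" using c uv by (auto intro: continuous_on_subset)
    obtain \<alpha> \<beta> where g: "u \<le> \<alpha>" "\<alpha> < \<beta>" "\<beta> \<le> v" "f (f (f (f \<alpha>))) = \<alpha>" "f (f (f (f \<beta>))) = \<beta>"
      "\<forall>t. \<alpha> < t \<and> t < \<beta> \<longrightarrow> f (f (f (f t))) \<noteq> t"
      using find_good[OF uv(2) cuv fK y] by blast
    have it: "continuous_on {a..b} (f^^4)" using iter_props[OF c m] by blast
    have c4: "continuous_on {\<alpha>..\<beta>} (f^^4)" using it g uv by (auto intro: continuous_on_subset)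
    obtain fw bw L1 L2 where o: "fw 0 = bw 0" "(f^^4) (fw 0) \<noteq> fw 0"
      "\<forall>n. fw n \<in> {\<alpha>..\<beta>} \<and> bw n \<in> {\<alpha>..\<beta>}"
      "\<forall>n. (f^^4) (fw n) = fw (Suc n)" "\<forall>n. (f^^4) (bw (Suc n)) = bw n" "\<forall>n>0. fw n \<noteq> fw 0"
      "fw \<longlonglongrightarrow> L1" "bw \<longlonglongrightarrow> L2" "L1 \<in> {\<alpha>..\<beta>}" "L2 \<in> {\<alpha>..\<beta>}" "(f^^4) L1 = L1" "(f^^4) L2 = L2"
      using orbit_any[OF g(2) c4] g by (auto simp: pow4)
    have sab: "{\<alpha>..\<beta>} \<subseteq> {a..b}" using g uv by auto
    have rng: "\<forall>n. fw n \<in> {a..b} \<and> bw n \<in> {a..b}" using o(3) sab by blast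
    have "n \<in> P" if "n \<ge> 1" for n
      unfolding P_def
      by (rule construct[OF c m o(1,2) rng o(4,5,6,7,8) _ _ o(11,12) that]) (use o(9,10) sab in auto)
    then have "P = {k. k \<ge> 1}" using sub by auto
    then show ?thesis unfolding P_def[symmetric] by auto
  qed
qed

end
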